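(* Let $\delta\ge3$. A $\delta$-PHO $K^{(\delta)}$ is separable within a rotation of Cartesian coordinates if and only if $\operatorname{rank}\mathcal M(K^{(\delta)})=1$.
   Context: A $\delta$-PHO is the Hamiltonian $K^{(\delta)}(q,p)=\tfrac12\sum_{j=1}^2(p_j^2+q_j^2)+V^{(\delta)}(q)$ on $\mathbb R^4$, with $V^{(\delta)}(q)=\sum_{h=0}^{\delta}v^{(\delta)}_h\binom{\delta}{h}q_1^hq_2^{\delta-h}$, real coefficients, $V^{(\delta)}\not\equiv0$. $\mathcal M(K^{(\delta)})$ is the $2\times(\delta-1)$ matrix whose $(h+1)$-st column, $h=0,\dots,\delta-2$, is $\big(v^{(\delta)}_h-v^{(\delta)}_{h+2},\ 2v^{(\delta)}_{h+1}\big)^T$. With $\sigma(\psi)=\begin{pmatrix}\cos\psi&-\sin\psi\\ \sin\psi&\cos\psi\end{pmatrix}$, the $\delta$-PHO is separable within a rotation of Cartesian coordinates if there exist $\psi\in[0,2\pi)$ and reals $(\tilde v_0,\tilde v_\delta)\ne(0,0)$ with $V^{(\delta)}(\sigma(\psi)^{-1}\tilde q)=\tilde v_0\tilde q_2^{\delta}+\tilde v_\delta\tilde q_1^{\delta}$ for all $\tilde q\in\mathbb R^2$. *)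

theory Defs
  imports Complex_Main "Jordan_Normal_Form.DL_Rank"
begin

definition PHO_pot :: "nat \<Rightarrow> (nat \<Rightarrow> real) \<Rightarrow> real \<Rightarrow> real \<Rightarrow> real" where
  "PHO_pot d v q1 q2 = (\<Sum>h=0..d. v h * real (d choose h) * q1 ^ h * q2 ^ (d - h))"

definition PHO_matrix :: "nat \<Rightarrow> (nat \<Rightarrow> real) \<Rightarrow> real mat" where
  "PHO_matrix d v = mat 2 (d - 1) (\<lambda>(i, h). if i = 0 then v h - v (h + 2) else 2 * v (h + 1))"

text \<open>Inverse rotation: sigma(psi)^(-1) (t1,t2) = (cos psi t1 + sin psi t2, - sin psi t1 + cos psi t2).\<close>
definition separable_within_rotation :: "nat \<Rightarrow> (nat \<Rightarrow> real) \<Rightarrow> bool" where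
  "separable_within_rotation d v \<longleftrightarrow>
     (\<exists>\<psi> a b. 0 \<le> \<psi> \<and> \<psi> < 2 * pi \<and> (a, b) \<noteq> (0, 0) \<and>
        (\<forall>t1 t2. PHO_pot d v (cos \<psi> * t1 + sin \<psi> * t2) (- sin \<psi> * t1 + cos \<psi> * t2)
                 = a * t2 ^ d + b * t1 ^ d))"

end

theory Submission
  imports Defs "Jordan_Normal_Form.DL_Rank_Submatrix"
begin


lemma det2: assumes "(B::real mat) \<in> carrier_mat 2 2"
  shows "det B = B$$(0,0)*B$$(1,1) - B$$(0,1)*B$$(1,0)"
proof -
  have "det B = (\<Sum>i<2. B $$ (i,0) * cofactor B i 0)"
    by (rule laplace_expansion_column[OF assms]) simp
  also have "\<dots> = B $$ (0,0) * cofactor B 0 0 + B $$ (1,0) * cofactor B 1 0"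
    by (simp add: numeral_2_eq_2)
  also have "cofactor B 0 0 = B$$(1,1)"
    unfolding cofactor_def using assms
    by (subst det_single) (auto simp: mat_delete_def delete_index_def insert_index_def)
  also have "cofactor B 1 0 = - B$$(0,1)"
    unfolding cofactor_def using assms
    by (subst det_single) (auto simp: mat_delete_def delete_index_def insert_index_def)
  finally show ?thesis by simp
qed

lemma least_eq_simp[simp]: "(LEAST a::nat. a = i) = i" by (rule Least_equality) auto
lemma pick_single: "pick {i} 0 = i" by simp

lemma pick_two: assumes "j1 < j2" shows "pick {j1,j2} 0 = j1" "pick {j1,j2} 1 = j2"
proof -
  show a: "pick {j1,j2} 0 = j1" using assms by (auto intro!: Least_equality)
  show "pick {j1,j2} 1 = j2" using assms a by (auto intro!: Least_equality)
qed

lemma rank_ge1: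
  assumes A: "(A::real mat) \<in> carrier_mat 2 n" and i: "i < 2" and j: "j < n" and nz: "A $$ (i,j) \<noteq> 0"
  shows "1 \<le> vec_space.rank 2 A"
proof -
  have c1: "{k. k < 2 \<and> k \<in> {i}} = {i}" using i by auto
  have c2: "{k. k < n \<and> k \<in> {j}} = {j}" using j by auto
  have S: "submatrix A {i} {j} \<in> carrier_mat 1 1" using A c1 c2 by (auto simp: submatrix_def)
  have "det (submatrix A {i} {j}) = A $$ (i,j)"
    using det_single[OF S] A c1 c2 by (simp add: submatrix_def)
  then have "card {k. k < n \<and> k \<in> {j}} \<le> vec_space.rank 2 A"
    using vec_space.rank_gt_minor[OF A] nz by metis
  then show ?thesis using c2 by simp
qed

lemma rank_ge2:
  assumes A: "(A::real mat) \<in> carrier_mat 2 n" and j: "j1 < j2" "j2 < n"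
    and nz: "A $$ (0,j1) * A $$ (1,j2) - A $$ (0,j2) * A $$ (1,j1) \<noteq> 0"
  shows "2 \<le> vec_space.rank 2 A"
proof -
  have c1: "{k. k < 2 \<and> k \<in> (UNIV::nat set)} = {0,1}" by auto
  have c2: "{k. k < n \<and> k \<in> {j1,j2}} = {j1,j2}" using j by auto
  have cc: "card {j1,j2} = 2" using j by auto
  have S: "submatrix A UNIV {j1,j2} \<in> carrier_mat 2 2" using A c2 cc by (auto simp: submatrix_def)
  have "det (submatrix A UNIV {j1,j2}) = A $$ (0,j1) * A $$ (1,j2) - A $$ (0,j2) * A $$ (1,j1)"
    using det2[OF S] A c2 cc pick_two[OF j(1)] by (simp add: submatrix_def pick_UNIV)
  then have "card {k. k < n \<and> k \<in> {j1,j2}} \<le> vec_space.rank 2 A"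
    using vec_space.rank_gt_minor[OF A] nz by metis
  then show ?thesis using c2 cc by simp
qed


lemma rank_le1:
  assumes A: "(A::real mat) \<in> carrier_mat 2 n" and PQ: "(P,Q) \<noteq> (0,0)"
    and rel: "\<And>h. h < n \<Longrightarrow> P * A $$ (0,h) + Q * A $$ (1,h) = 0"
  shows "vec_space.rank 2 A \<le> 1"
proof -
  define N where "N = P^2 + Q^2"
  have N: "N \<noteq> 0" using PQ unfolding N_def by (auto simp: sum_power2_eq_zero_iff)
  show ?thesis
  proof (rule vec_space.rank_le_1_product_entries[OF A,
        of "\<lambda>r. if r = 0 then -Q else P" "\<lambda>h. (-Q*A$$(0,h) + P*A$$(1,h))/N"])
    fix r c assume r: "r < dim_row A" and c: "c < dim_col A"
    have rc: "r < 2" "c < n" using r c A by auto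
    have e: "P * A $$ (0,c) + Q * A $$ (1,c) = 0" using rel rc by auto
    show "A $$ (r,c) = (if r = 0 then -Q else P) * ((-Q*A$$(0,c) + P*A$$(1,c))/N)"
    proof (cases "r = 0")
      case True
      have e2: "N * A $$ (0,c) - (-Q * (-Q*A$$(0,c) + P*A$$(1,c))) = P * (P * A $$ (0,c) + Q * A $$ (1,c))"
        unfolding N_def by (simp add: power2_eq_square algebra_simps)
      have "N * A $$ (0,c) = -Q * (-Q*A$$(0,c) + P*A$$(1,c))"
        using e2 e by simp
      then show ?thesis using True N by (simp add: field_simps)
    next
      case False
      then have r1: "r = 1" using rc by auto
      have e2: "N * A $$ (1,c) - P * (-Q*A$$(0,c) + P*A$$(1,c)) = Q * (P * A $$ (0,c) + Q * A $$ (1,c))"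
        unfolding N_def by (simp add: power2_eq_square algebra_simps)
      have "N * A $$ (1,c) = P * (-Q*A$$(0,c) + P*A$$(1,c))"
        using e2 e by simp
      then show ?thesis using r1 N by (simp add: field_simps)
    qed
  qed
qed

lemma rank_eq1_imp:
  assumes A: "(A::real mat) \<in> carrier_mat 2 n" and r: "vec_space.rank 2 A = 1"
  shows "\<exists>P Q. (P,Q) \<noteq> (0,0) \<and> (\<forall>h<n. P * A $$ (0,h) + Q * A $$ (1,h) = 0)"
proof -
  have "\<exists>i j. i < 2 \<and> j < n \<and> A $$ (i,j) \<noteq> 0"
  proof (rule ccontr)
    assume "\<not> ?thesis"
    then have "A = 0\<^sub>m 2 n" using A by (intro eq_matI) auto
    then show False using r by (simp add: vec_space.rank_0I)
  qed
  then obtain i j where ij: "i < 2" "j < n" "A $$ (i,j) \<noteq> 0" by blast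
  show ?thesis
  proof (intro exI conjI allI impI)
    show "(A $$ (1,j), - A $$ (0,j)) \<noteq> (0,0)" using ij less_2_cases by (cases "i = 0") auto
    fix h assume h: "h < n"
    show "A $$ (1,j) * A $$ (0,h) + - A $$ (0,j) * A $$ (1,h) = 0"
    proof (rule ccontr)
      assume ne: "\<not> ?thesis"
      consider "h < j" | "h = j" | "j < h" by arith
      then show False
      proof cases
        case 1
        have "2 \<le> vec_space.rank 2 A"
          by (rule rank_ge2[OF A 1 ij(2)]) (use ne in \<open>simp add: algebra_simps\<close>)
        then show False using r by simp
      next
        case 2 then show False using ne by (simp add: algebra_simps)
      next
        case 3
        have "2 \<le> vec_space.rank 2 A"
          by (rule rank_ge2[OF A 3 h]) (use ne in \<open>simp add: algebra_simps\<close>)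
        then show False using r by simp
      qed
    qed
  qed
qed


definition uu :: "nat \<Rightarrow> real \<Rightarrow> real \<Rightarrow> real \<Rightarrow> real \<Rightarrow> nat \<Rightarrow> real" where
  "uu d a b c s h = a * s^h * c^(d-h) + b * c^h * (-s)^(d-h)"

lemma uu_rec:
  assumes "h + 2 \<le> d"
  shows "c * s * (uu d a b c s h - uu d a b c s (h+2)) = (c^2 - s^2) * uu d a b c s (h+1)"
proof -
  obtain k where d: "d = h + 2 + k" using assms le_Suc_ex by blast
  have 1: "d - h = k + 2" "d - (h+2) = k" "d - (h+1) = k + 1" using d by auto
  show ?thesis unfolding uu_def 1 by (simp add: power_add power2_eq_square algebra_simps)
qed

lemma pot_binom:
  "PHO_pot d (uu d a b c s) q1 q2 = a*(s*q1+c*q2)^d + b*(c*q1 - s*q2)^d"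
proof -
  have "PHO_pot d (uu d a b c s) q1 q2 =
     (\<Sum>h=0..d. a * (real (d choose h) * (s*q1)^h * (c*q2)^(d-h)) +
                b * (real (d choose h) * (c*q1)^h * (-s*q2)^(d-h)))"
    unfolding PHO_pot_def uu_def
    by (intro sum.cong refl, simp only: power_mult_distrib, simp add: algebra_simps)
  also have "\<dots> = a * (\<Sum>h=0..d. real (d choose h) * (s*q1)^h * (c*q2)^(d-h)) +
     b * (\<Sum>h=0..d. real (d choose h) * (c*q1)^h * (-s*q2)^(d-h))"
    by (simp only: sum.distrib sum_distrib_left)
  also have "\<dots> = a*(s*q1+c*q2)^d + b*(c*q1 + (- s*q2))^d"
    by (simp only: binomial_ring atLeast0AtMost)
  finally show ?thesis by simp
qed

lemma pot_cong: "(\<And>h. h \<le> d \<Longrightarrow> v h = w h) \<Longrightarrow> PHO_pot d v q1 q2 = PHO_pot d w q1 q2"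
  unfolding PHO_pot_def by (intro sum.cong) auto

lemma pot_unique:
  assumes "\<And>q1 q2. PHO_pot d v q1 q2 = PHO_pot d w q1 q2"
  shows "\<And>h. h \<le> d \<Longrightarrow> v h = w h"
proof -
  have "\<forall>x. (\<Sum>h\<le>d. ((v h - w h) * real (d choose h)) * x^h) = 0"
  proof
    fix x :: real
    have "PHO_pot d v x 1 - PHO_pot d w x 1 = 0" using assms by simp
    moreover have "PHO_pot d v x 1 - PHO_pot d w x 1 = (\<Sum>h\<le>d. ((v h - w h) * real (d choose h)) * x^h)"
      unfolding PHO_pot_def atLeast0AtMost sum_subtractf[symmetric]
      by (intro sum.cong refl) (simp add: algebra_simps)
    ultimately show "(\<Sum>h\<le>d. ((v h - w h) * real (d choose h)) * x^h) = 0" by simp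
  qed
  then have "\<forall>h\<le>d. (v h - w h) * real (d choose h) = 0" by (rule polyfun_eq_0[THEN iffD1])
  then show "\<And>h. h \<le> d \<Longrightarrow> v h = w h" by auto
qed

lemma solve_rec_deg:
  assumes cs: "c^2 + s^2 = (1::real)" and d: "0 < d" and z: "c = 0 \<or> s = 0"
    and rec: "\<And>h. h + 2 \<le> d \<Longrightarrow> c*s*(v h - v (h+2)) = (c^2 - s^2) * v (h+1)"
  shows "\<exists>a b. \<forall>h\<le>d. v h = uu d a b c s h"
proof -
  have mid: "v h = 0" if "0 < h" "h < d" for h
  proof -
    have "h - 1 + 2 \<le> d" "h - 1 + 1 = h" using that by auto
    then have "c*s*(v (h-1) - v (h-1+2)) = (c^2 - s^2) * v h" using rec by metis
    then have "(c^2 - s^2) * v h = 0" using z by auto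
    moreover have "c^2 - s^2 \<noteq> 0" using z cs by auto
    ultimately show ?thesis by simp
  qed
  show ?thesis
  proof (cases "c = 0")
    case True
    then have s: "s \<noteq> 0" using cs by auto
    show ?thesis
    proof (intro exI allI impI)
      fix h assume h: "h \<le> d"
      show "v h = uu d (v d / s^d) (v 0 / (-s)^d) c s h"
        using mid[of h] h d s True by (cases "h = 0"; cases "h = d") (auto simp: uu_def power_0_left)
    qed
  next
    case False
    then have s: "s = 0" using z by auto
    show ?thesis
    proof (intro exI allI impI)
      fix h assume h: "h \<le> d"
      show "v h = uu d (v 0 / c^d) (v d / c^d) c s h"
        using mid[of h] h d s False by (cases "h = 0"; cases "h = d") (auto simp: uu_def power_0_left)
    qed
  qed
qed

lemma solve_rec_gen:
  assumes cs: "c^2 + s^2 = (1::real)" and z: "c \<noteq> 0" "s \<noteq> 0"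
    and rec: "\<And>h. h + 2 \<le> d \<Longrightarrow> c*s*(v h - v (h+2)) = (c^2 - s^2) * v (h+1)"
  shows "\<exists>a b. \<forall>h\<le>d. v h = uu d a b c s h"
proof -
  define A where "A = c*s*v 1 + c^2 * v 0"
  define B where "B = s^2 * v 0 - c*s*v 1"
  define k where "k = (c^2 - s^2) / (c*s)"
  define X where "X h = A * (s/c)^h + B * (-c/s)^h" for h
  have r1: "(s/c)^2 = 1 - k * (s/c)" unfolding k_def using z cs
    by (simp add: field_simps power2_eq_square)
  have r2: "(-c/s)^2 = 1 - k * (-c/s)" unfolding k_def using z cs
    by (simp add: field_simps power2_eq_square)
  have Xrec: "X (h+2) = X h - k * X (h+1)" for h
  proof -
    have "X (h+2) = A * (s/c)^h * (s/c)^2 + B * (-c/s)^h * (-c/s)^2"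
      by (simp only: X_def power_add mult.assoc)
    also have "\<dots> = X h - k * X (h+1)" unfolding r1 r2 X_def by (simp add: algebra_simps)
    finally show ?thesis .
  qed
  have vrec: "v (h+2) = v h - k * v (h+1)" if "h + 2 \<le> d" for h
    using rec[OF that] z unfolding k_def by (simp add: field_simps)
  have X0: "X 0 = v 0" unfolding X_def A_def B_def using cs by (simp add: algebra_simps) (metis distrib_left mult_1_right)
  have X1a: "A*s^2 - B*c^2 = c*s*v 1*(c^2+s^2)" unfolding A_def B_def
    by (simp add: algebra_simps power2_eq_square)
  have X1b: "X 1 = (A*s^2 - B*c^2) / (c*s)" unfolding X_def using z
    by (simp add: field_simps power2_eq_square)
  have X1: "X 1 = v 1" unfolding X1b X1a cs using z by simp
  have VX: "h \<le> d \<longrightarrow> v h = X h" for h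
  proof (induction h rule: less_induct)
    case (less h)
    show ?case
    proof (cases "h < 2")
      case True then have "h = 0 \<or> h = 1" by auto
      then show ?thesis using X0 X1 by auto
    next
      case False
      then obtain g where g: "h = g + 2" by (metis add.commute le_Suc_ex not_less)
      show ?thesis using less g vrec[of g] Xrec[of g] by auto
    qed
  qed
  show ?thesis
  proof (intro exI allI impI)
    fix h assume h: "h \<le> d"
    have "uu d (A / c^d) (B / (-s)^d) c s h = X h"
    proof -
      have e1: "c^d = c^h * c^(d-h)" "(-s)^d = (-s)^h * (-s)^(d-h)"
        using h by (simp_all flip: power_add)
      have e2: "(-s)^h * (-(c/s))^h = c^h" using z by (simp flip: power_mult_distrib)
      show ?thesis unfolding uu_def X_def e1 using z e2
        by (simp add: field_simps power_divide)
    qed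
    then show "v h = uu d (A / c^d) (B / (-s)^d) c s h" using VX h by simp
  qed
qed


lemma solve_rec:
  assumes cs: "c^2 + s^2 = (1::real)" and d: "0 < d"
    and rec: "\<And>h. h + 2 \<le> d \<Longrightarrow> c*s*(v h - v (h+2)) = (c^2 - s^2) * v (h+1)"
  shows "\<exists>a b. \<forall>h\<le>d. v h = uu d a b c s h"
proof (cases "c = 0 \<or> s = 0")
  case True then show ?thesis using solve_rec_deg[OF cs d True rec] by blast
next
  case False then show ?thesis using solve_rec_gen[OF cs _ _ rec] by blast
qed

lemma pot_zero: "PHO_pot d (\<lambda>_. 0) q1 q2 = 0" unfolding PHO_pot_def by simp

theorem mainTheorem3:
  fixes d :: nat and v :: "nat \<Rightarrow> real"
  assumes "d \<ge> 3"
    and "\<exists>q1 q2. PHO_pot d v q1 q2 \<noteq> 0"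
  shows "separable_within_rotation d v \<longleftrightarrow> vec_space.rank 2 (PHO_matrix d v) = 1"
proof -
  define M where "M = PHO_matrix d v"
  have Mc: "M \<in> carrier_mat 2 (d-1)" unfolding M_def PHO_matrix_def by simp
  have M0: "M $$ (0,h) = v h - v (h+2)" if "h < d - 1" for h
    using that unfolding M_def PHO_matrix_def by simp
  have M1: "M $$ (1,h) = 2 * v (h+1)" if "h < d - 1" for h
    using that unfolding M_def PHO_matrix_def by simp
  obtain q1 q2 where nz: "PHO_pot d v q1 q2 \<noteq> 0" using assms(2) by blast
  have vnz: "\<exists>h\<le>d. v h \<noteq> 0"
  proof (rule ccontr)
    assume "\<not> ?thesis"
    then have "PHO_pot d v q1 q2 = PHO_pot d (\<lambda>_. 0) q1 q2" by (intro pot_cong) auto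
    then show False using nz pot_zero by simp
  qed
  have rank_ge: "1 \<le> vec_space.rank 2 M"
  proof (rule ccontr)
    assume nr: "\<not> ?thesis"
    have allz: "M $$ (i,j) = 0" if "i < 2" "j < d - 1" for i j
    proof (rule ccontr)
      assume "M $$ (i,j) \<noteq> 0"
      then show False using rank_ge1[OF Mc that] nr by simp
    qed
    have "v h = 0" if h: "h \<le> d" for h
    proof -
      consider "h = 0" | "h = d" | "0 < h" "h < d" using h by linarith
      then show ?thesis
      proof cases
        case 1
        have "v 0 - v 2 = 0" using allz[of 0 0] M0[of 0] assms(1) by (simp add: numeral_2_eq_2)
        moreover have "2 * v (1+1) = 0" using allz[of 1 1] M1[of 1] assms(1) by simp
        ultimately show ?thesis using 1 by (simp add: numeral_2_eq_2)
      next
        case 2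
        have "v (d-2) - v (d-2+2) = 0" using allz[of 0 "d-2"] M0[of "d-2"] assms(1) by simp
        moreover have "2 * v (d-3+1) = 0" using allz[of 1 "d-3"] M1[of "d-3"] assms(1) by simp
        moreover have "d-3+1 = d-2" "d-2+2 = d" using assms(1) by auto
        ultimately show ?thesis using 2 by simp
      next
        case 3
        have "2 * v (h-1+1) = 0" using allz[of 1 "h-1"] M1[of "h-1"] 3 by simp
        moreover have "h-1+1 = h" using 3 by simp
        ultimately show ?thesis by simp
      qed
    qed
    then show False using vnz by blast
  qed
  show ?thesis unfolding M_def[symmetric]
  proof
    assume "separable_within_rotation d v"
    then obtain \<psi> a b where ab: "(a, b) \<noteq> (0, 0)" and
      iden: "\<And>t1 t2. PHO_pot d v (cos \<psi> * t1 + sin \<psi> * t2) (- sin \<psi> * t1 + cos \<psi> * t2)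
                 = a * t2 ^ d + b * t1 ^ d"
      unfolding separable_within_rotation_def by blast
    define c where "c = cos \<psi>"
    define s where "s = sin \<psi>"
    have cs: "c^2 + s^2 = 1" unfolding c_def s_def by simp
    have "PHO_pot d v q1 q2 = PHO_pot d (uu d a b c s) q1 q2" for q1 q2
    proof -
      have e1: "c * (c*q1 - s*q2) + s * (s*q1 + c*q2) = q1"
      proof -
        have "c * (c*q1 - s*q2) + s * (s*q1 + c*q2) = (c^2+s^2)*q1" by (simp add: algebra_simps power2_eq_square)
        then show ?thesis using cs by simp
      qed
      have e2: "- s * (c*q1 - s*q2) + c * (s*q1 + c*q2) = q2"
      proof -
        have "- s * (c*q1 - s*q2) + c * (s*q1 + c*q2) = (c^2+s^2)*q2" by (simp add: algebra_simps power2_eq_square)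
        then show ?thesis using cs by simp
      qed
      have "PHO_pot d v q1 q2 = a * (s*q1 + c*q2)^d + b * (c*q1 - s*q2)^d"
        using iden[of "c*q1 - s*q2" "s*q1 + c*q2"] e1 e2 unfolding c_def s_def by simp
      then show ?thesis using pot_binom by simp
    qed
    then have vu: "\<And>h. h \<le> d \<Longrightarrow> v h = uu d a b c s h" using pot_unique by blast
    have PQ: "(2*c*s, -(c^2 - s^2)) \<noteq> (0,0)"
    proof
      assume "(2*c*s, -(c^2 - s^2)) = (0,0)"
      then have "(2*c*s)^2 + (c^2-s^2)^2 = 0" by simp
      moreover have "(2*c*s)^2 + (c^2-s^2)^2 = (c^2+s^2)^2" by (simp add: algebra_simps power2_eq_square)
      ultimately show False using cs by simp
    qed
    have "vec_space.rank 2 M \<le> 1"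
    proof (rule rank_le1[OF Mc PQ])
      fix h assume h: "h < d - 1"
      then have h2: "h + 2 \<le> d" by simp
      have "2*c*s * M $$ (0,h) + -(c^2 - s^2) * M $$ (1,h)
          = 2 * (c*s*(uu d a b c s h - uu d a b c s (h+2)) - (c^2 - s^2) * uu d a b c s (h+1))"
      proof -
        have m0: "M $$ (0,h) = uu d a b c s h - uu d a b c s (h+2)"
          using M0[OF h] vu[of h] vu[of "h+2"] h2 by simp
        have m1: "M $$ (1,h) = 2 * uu d a b c s (h+1)"
          using M1[OF h] vu[of "h+1"] h2 by simp
        show ?thesis unfolding m0 m1 by (simp add: algebra_simps)
      qed
      also have "\<dots> = 0" using uu_rec[OF h2] by simp
      finally show "2*c*s * M $$ (0,h) + -(c^2 - s^2) * M $$ (1,h) = 0" .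
    qed
    then show "vec_space.rank 2 M = 1" using rank_ge by simp
  next
    assume r1: "vec_space.rank 2 M = 1"
    obtain P Q where PQ: "(P,Q) \<noteq> (0,0)" and rel: "\<And>h. h < d - 1 \<Longrightarrow> P * M $$ (0,h) + Q * M $$ (1,h) = 0"
      using rank_eq1_imp[OF Mc r1] by blast
    define r where "r = sqrt (P^2 + Q^2)"
    have N: "P^2 + Q^2 > 0" using PQ by (auto simp: sum_power2_gt_zero_iff)
    then have r: "r > 0" unfolding r_def by simp
    have r2: "r^2 = P^2 + Q^2" unfolding r_def using N by simp
    have "(-Q/r)^2 + (P/r)^2 = 1" using r r2 N PQ by (simp add: power_divide add_divide_distrib[symmetric])
    then obtain \<theta> where th: "0 \<le> \<theta>" "\<theta> < 2*pi" "-Q/r = cos \<theta>" "P/r = sin \<theta>"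
      using sincos_total_2pi by blast
    define \<psi> where "\<psi> = \<theta>/2"
    define c where "c = cos \<psi>"
    define s where "s = sin \<psi>"
    have cs: "c^2 + s^2 = 1" unfolding c_def s_def by simp
    have th2: "\<theta> = 2*\<psi>" unfolding \<psi>_def by simp
    have Qe: "Q = - r * (c^2 - s^2)" using th(3) r unfolding th2 c_def s_def cos_double
      by (simp add: field_simps)
    have Pe: "P = r * (2*s*c)" using th(4) r unfolding th2 c_def s_def sin_double
      by (simp add: field_simps)
    have rec: "c*s*(v h - v (h+2)) = (c^2 - s^2) * v (h+1)" if h2: "h + 2 \<le> d" for h
    proof -
      have h: "h < d - 1" using h2 by simp
      have "0 = P * M $$ (0,h) + Q * M $$ (1,h)" using rel[OF h] by simp
      also have "\<dots> = 2 * r * (c*s*(v h - v (h+2)) - (c^2 - s^2) * v (h+1))"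
        unfolding Pe Qe M0[OF h] M1[OF h] by (simp add: algebra_simps)
      finally show ?thesis using r by simp
    qed
    obtain a b where vu: "\<forall>h\<le>d. v h = uu d a b c s h"
    proof -
      have "0 < d" using assms(1) by simp
      then show ?thesis using solve_rec[OF cs _ rec, of d] that by blast
    qed
    have ab: "(a,b) \<noteq> (0,0)"
    proof
      assume "(a,b) = (0,0)"
      then have "\<forall>h\<le>d. v h = 0" using vu by (simp add: uu_def)
      then show False using vnz by blast
    qed
    have iden: "PHO_pot d v (c * t1 + s * t2) (- s * t1 + c * t2) = a * t2 ^ d + b * t1 ^ d" for t1 t2
    proof -
      have e1: "s * (c * t1 + s * t2) + c * (- s * t1 + c * t2) = t2"
      proof -
        have "s * (c * t1 + s * t2) + c * (- s * t1 + c * t2) = (c^2+s^2)*t2" by (simp add: algebra_simps power2_eq_square)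
        then show ?thesis using cs by simp
      qed
      have e2: "c * (c * t1 + s * t2) - s * (- s * t1 + c * t2) = t1"
      proof -
        have "c * (c * t1 + s * t2) - s * (- s * t1 + c * t2) = (c^2+s^2)*t1" by (simp add: algebra_simps power2_eq_square)
        then show ?thesis using cs by simp
      qed
      have "PHO_pot d v (c * t1 + s * t2) (- s * t1 + c * t2) = PHO_pot d (uu d a b c s) (c * t1 + s * t2) (- s * t1 + c * t2)"
        using vu by (intro pot_cong) auto
      also have "\<dots> = a * t2 ^ d + b * t1 ^ d" unfolding pot_binom e1 e2 ..
      finally show ?thesis .
    qed
    have "0 \<le> \<psi>" "\<psi> < 2 * pi" using th(1,2) pi_gt_zero unfolding \<psi>_def by linarith+
    then show "separable_within_rotation d v" unfolding separable_within_rotation_def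
      using ab iden unfolding c_def s_def by blast
  qed
qed

end
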